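(* Let $M$ be a proper metric space, $X_1,\dots,X_n$ a coarsely transverse collection of half spaces in $M$, and $A_0=X_1\cdots X_n$, $A_i=X_i^cX_{i+1}\cdots X_n$ ($i=1,\dots,n$). Then $$[\mathbf 1\wedge X_1\wedge\dots\wedge X_n]=(-1)^n\, n!\,[A_0\wedge\dots\wedge A_n]\in HX^n(M).$$
   Context: Borel sets are identified with their indicator functions; $\mathbf 1$ is the constant function. For $Y\subseteq M$, $Y_R=\{x:d(x,Y)\le R\}$. Borel sets $X_1,\dots,X_n$ form a coarsely transverse collection of half spaces if $\bigcap_i (X_i)_R\cap(X_i^c)_R$ is bounded for all $R\ge0$. Coarse cohomology: $M^{n+1}$ has the max metric, $\Delta_R$ is the $R$-thickening of the multi-diagonal; $CX^n(M)$ is the space of locally bounded Borel $\theta:M^{n+1}\to\mathbb{C}$ with $\mathrm{supp}(\theta)\cap\Delta_R$ bounded for all $R$, differential $\delta\theta=\sum_{i=0}^{n+1}(-1)^i\pi_i^*\theta$ ($\pi_i$ omits coordinate $i$), and $HX^n(M)$ its cohomology. $f_0\wedge\dots\wedge f_n=\sum_{\tau\in S_{n+1}}\mathrm{sgn}(\tau)f_{\tau_0}\otimes\dots\otimes f_{\tau_n}$. *)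

theory Defs
  imports "HOL-Analysis.Analysis" "HOL-Combinatorics.Permutations"
begin

text \<open>Points of M^(n+1) are lists of length n+1; the max metric is used.
  Proper metric spaces are those of class heine_borel.\<close>

definition thick :: "'a::metric_space set \<Rightarrow> real \<Rightarrow> 'a set" where
  "thick Y R = {x. Y \<noteq> {} \<and> infdist x Y \<le> R}"

definition coarsely_transverse :: "nat \<Rightarrow> (nat \<Rightarrow> 'a::metric_space set) \<Rightarrow> bool" where
  "coarsely_transverse n X \<longleftrightarrow>
     (\<forall>i\<in>{1..n}. X i \<in> sets borel) \<and>
     (\<forall>R\<ge>0. bounded (\<Inter>i\<in>{1..n}. thick (X i) R \<inter> thick (- X i) R))"

definition bounded_tuples :: "'a::metric_space list set \<Rightarrow> bool" where
  "bounded_tuples S \<longleftrightarrow> (\<exists>c r. \<forall>xs\<in>S. \<forall>i<length xs. dist (xs ! i) c \<le> r)"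

definition diag_thick :: "nat \<Rightarrow> real \<Rightarrow> 'a::metric_space list set" where
  "diag_thick n R = {xs. length xs = Suc n \<and> (\<exists>x. \<forall>i<Suc n. dist (xs ! i) x \<le> R)}"

definition CX :: "nat \<Rightarrow> ('a::metric_space list \<Rightarrow> complex) set" where
  "CX n = {\<theta>.
     (\<forall>xs. length xs \<noteq> Suc n \<longrightarrow> \<theta> xs = 0) \<and>
     (\<theta> \<circ> (\<lambda>f. map f [0..<Suc n])) \<in> borel_measurable (PiM {..n} (\<lambda>_. borel)) \<and>
     (\<forall>S. bounded_tuples S \<longrightarrow> (\<exists>C. \<forall>xs\<in>S. norm (\<theta> xs) \<le> C)) \<and>
     (\<forall>R. bounded_tuples ({xs. \<theta> xs \<noteq> 0} \<inter> diag_thick n R))}"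

definition omit :: "nat \<Rightarrow> 'a list \<Rightarrow> 'a list" where
  "omit i xs = take i xs @ drop (Suc i) xs"

definition cobdry :: "nat \<Rightarrow> ('a list \<Rightarrow> complex) \<Rightarrow> 'a list \<Rightarrow> complex" where
  "cobdry n \<theta> xs = (if length xs = Suc (Suc n)
      then (\<Sum>i\<le>Suc n. (-1)^i * \<theta> (omit i xs)) else 0)"

definition same_HX_class :: "nat \<Rightarrow> ('a::metric_space list \<Rightarrow> complex) \<Rightarrow> ('a list \<Rightarrow> complex) \<Rightarrow> bool" where
  "same_HX_class n \<theta>1 \<theta>2 \<longleftrightarrow>
     \<theta>1 \<in> CX n \<and> \<theta>2 \<in> CX n \<and> cobdry n \<theta>1 = (\<lambda>_. 0) \<and> cobdry n \<theta>2 = (\<lambda>_. 0) \<and>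
     (if n = 0 then \<theta>1 = \<theta>2
      else (\<exists>\<psi>\<in>CX (n - 1). (\<lambda>xs. \<theta>1 xs - \<theta>2 xs) = cobdry (n - 1) \<psi>))"

definition wedge :: "nat \<Rightarrow> (nat \<Rightarrow> 'a \<Rightarrow> complex) \<Rightarrow> 'a list \<Rightarrow> complex" where
  "wedge n f xs = (if length xs = Suc n then
      (\<Sum>\<tau> | \<tau> permutes {..n}. of_int (sign \<tau>) * (\<Prod>i\<le>n. f (\<tau> i) (xs ! i))) else 0)"

definition ind :: "'a set \<Rightarrow> 'a \<Rightarrow> complex" where
  "ind Y = indicator Y"

end

theory Submission
  imports Defs "Jordan_Normal_Form.Determinant"
begin
section \<open>Cochain algebra on lists\<close>

lemma length_omit: "i < length xs \<Longrightarrow> length (omit i xs) = length xs - 1"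
  by (simp add: omit_def)

lemma nth_omit: "i < length xs \<Longrightarrow> j < length xs - 1 \<Longrightarrow>
    omit i xs ! j = (if j < i then xs ! j else xs ! Suc j)"
  by (auto simp: omit_def nth_append min_def)

lemma omit_0_Cons[simp]: "omit 0 (y # ys) = ys"
  by (simp add: omit_def)

lemma omit_Suc_Cons[simp]: "omit (Suc i) (y # ys) = y # omit i ys"
  by (simp add: omit_def)

lemma set_omit: "set (omit i xs) \<subseteq> set xs"
  unfolding omit_def using set_take_subset set_drop_subset by fastforce

definition Dc :: "('a list \<Rightarrow> complex) \<Rightarrow> 'a list \<Rightarrow> complex" where
  "Dc \<phi> xs = (\<Sum>i<length xs. (-1)^i * \<phi> (omit i xs))"

lemma Dc_Nil[simp]: "Dc \<phi> [] = 0"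
  by (simp add: Dc_def)

lemma Dc_Cons: "Dc \<phi> (y # ys) = \<phi> ys - Dc (\<lambda>zs. \<phi> (y # zs)) ys"
  unfolding Dc_def length_Cons sum.lessThan_Suc_shift by (simp add: sum_negf)

lemma Dc_diff: "Dc (\<lambda>zs. f zs - g zs) xs = Dc f xs - Dc g xs"
  unfolding Dc_def by (simp add: sum_subtractf[symmetric] algebra_simps)

lemma Dc_add: "Dc (\<lambda>zs. f zs + g zs) xs = Dc f xs + Dc g xs"
  unfolding Dc_def by (simp add: sum.distrib[symmetric] algebra_simps)

lemma Dc_cmult: "Dc (\<lambda>zs. c * f zs) xs = c * Dc f xs"
  unfolding Dc_def by (simp add: sum_distrib_left algebra_simps)

lemma Dc_zero: "Dc (\<lambda>zs. 0) xs = 0"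
  unfolding Dc_def by simp

lemma DD: "Dc (Dc \<phi>) xs = 0"
proof (induction xs arbitrary: \<phi>)
  case Nil
  then show ?case by simp
next
  case (Cons y ys)
  have "(\<lambda>zs. Dc \<phi> (y # zs)) = (\<lambda>zs. \<phi> zs - Dc (\<lambda>ws. \<phi> (y # ws)) zs)"
    by (simp add: Dc_Cons)
  then have "Dc (Dc \<phi>) (y # ys) = Dc \<phi> ys - (Dc \<phi> ys - Dc (Dc (\<lambda>ws. \<phi> (y # ws))) ys)"
    by (simp add: Dc_Cons Dc_diff)
  then show ?case using Cons by simp
qed

definition star :: "('a \<Rightarrow> complex) \<Rightarrow> ('a list \<Rightarrow> complex) \<Rightarrow> 'a list \<Rightarrow> complex" where
  "star f \<beta> xs = (\<Sum>i<length xs. (-1)^i * f (xs ! i) * \<beta> (omit i xs))"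

definition cup1 :: "('a \<Rightarrow> complex) \<Rightarrow> ('a list \<Rightarrow> complex) \<Rightarrow> 'a list \<Rightarrow> complex" where
  "cup1 f \<beta> xs = (f (xs ! 1) - f (xs ! 0)) * \<beta> (tl xs)"

definition ssum :: "('a \<Rightarrow> complex) \<Rightarrow> 'a list \<Rightarrow> complex" where
  "ssum f xs = sum_list (map f xs)"

lemma ssum_omit: "i < length ys \<Longrightarrow> ssum g (omit i ys) = ssum g ys - g (ys ! i)"
proof -
  assume i: "i < length ys"
  have "ssum g ys = ssum g (take i ys @ ys ! i # drop (Suc i) ys)"
    using id_take_nth_drop[OF i] by simp
  then show ?thesis by (simp add: ssum_def omit_def)
qed

lemma L1:
  assumes "\<And>zs. Dc \<beta> zs = 0"
  shows "Dc (\<lambda>xs. ssum g xs * \<beta> xs) ys = - star g \<beta> ys"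
proof -
  have "Dc (\<lambda>xs. ssum g xs * \<beta> xs) ys =
      (\<Sum>i<length ys. (-1)^i * ((ssum g ys - g (ys ! i)) * \<beta> (omit i ys)))"
    unfolding Dc_def by (rule sum.cong) (auto simp: ssum_omit)
  also have "\<dots> = ssum g ys * Dc \<beta> ys - star g \<beta> ys"
    unfolding Dc_def star_def
    by (simp add: sum_distrib_left sum_subtractf[symmetric] algebra_simps)
  finally show ?thesis using assms by simp
qed

lemma L2:
  assumes "\<beta> [] = 0"
  shows "Dc (\<lambda>xs. g (hd xs) * \<beta> xs) ys = cup1 g \<beta> ys + g (hd ys) * Dc \<beta> ys"
proof (cases ys)
  case Nil
  then show ?thesis using assms by (simp add: cup1_def)
next
  case (Cons y zs)
  have f3: "g (hd zs) * \<beta> zs = g (zs ! 0) * \<beta> zs"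
    using assms by (cases zs) auto
  have "Dc (\<lambda>xs. g (hd xs) * \<beta> xs) (y # zs) = g (hd zs) * \<beta> zs - g y * Dc (\<lambda>ws. \<beta> (y # ws)) zs"
    by (simp add: Dc_Cons Dc_cmult)
  also have "\<dots> = g (zs ! 0) * \<beta> zs - g y * Dc (\<lambda>ws. \<beta> (y # ws)) zs"
    using f3 by simp
  also have "\<dots> = (g (zs ! 0) - g y) * \<beta> zs + g y * (\<beta> zs - Dc (\<lambda>ws. \<beta> (y # ws)) zs)"
    by (simp add: algebra_simps)
  also have "\<dots> = cup1 g \<beta> (y # zs) + g (hd (y # zs)) * Dc \<beta> (y # zs)"
    by (simp add: cup1_def Dc_Cons)
  finally show ?thesis using Cons by simp
qed

lemma Lcup:
  assumes "\<phi> [] = 0"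
  shows "Dc (cup1 f \<phi>) ys = - cup1 f (Dc \<phi>) ys"
proof (cases ys)
  case Nil
  then show ?thesis by (simp add: cup1_def)
next
  case (Cons y0 ys')
  show ?thesis
  proof (cases ys')
    case Nil
    then show ?thesis using Cons assms by (simp add: cup1_def Dc_Cons)
  next
    case (Cons y1 rest)
    have e: "(\<lambda>ws. cup1 f \<phi> (y0 # y1 # ws)) = (\<lambda>ws. (f y1 - f y0) * \<phi> (y1 # ws))"
      by (simp add: cup1_def)
    have "Dc (cup1 f \<phi>) (y0 # y1 # rest) =
        cup1 f \<phi> (y1 # rest) - (cup1 f \<phi> (y0 # rest) - (f y1 - f y0) * Dc (\<lambda>ws. \<phi> (y1 # ws)) rest)"
      by (simp add: Dc_Cons e Dc_cmult)
    also have "\<dots> = (f y0 - f y1) * \<phi> rest + (f y1 - f y0) * Dc (\<lambda>ws. \<phi> (y1 # ws)) rest"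
      by (simp add: cup1_def algebra_simps)
    also have "\<dots> = - cup1 f (Dc \<phi>) (y0 # y1 # rest)"
      by (simp add: cup1_def Dc_Cons algebra_simps)
    finally show ?thesis using Cons \<open>ys = y0 # ys'\<close> by simp
  qed
qed

lemma Dc_star1: "Dc \<phi> xs = star (\<lambda>_. 1) \<phi> xs"
  by (simp add: Dc_def star_def)

section \<open>Wedge and determinants\<close>

definition Wm :: "nat \<Rightarrow> (nat \<Rightarrow> 'a \<Rightarrow> complex) \<Rightarrow> 'a list \<Rightarrow> complex mat" where
  "Wm n F xs = mat (Suc n) (Suc n) (\<lambda>(i, j). F j (xs ! i))"

lemma Wm_carrier: "Wm n F xs \<in> carrier_mat (Suc n) (Suc n)"
  by (simp add: Wm_def)

lemma wedge_len: "length xs \<noteq> Suc n \<Longrightarrow> wedge n F xs = 0"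
  by (simp add: wedge_def)

lemma wedge_det: "length xs = Suc n \<Longrightarrow> wedge n F xs = det (Wm n F xs)"
proof -
  assume len: "length xs = Suc n"
  have S: "{0..<Suc n} = {..n}" by auto
  have "det (Wm n F xs) = (\<Sum>p\<in>{p. p permutes {..n}}. of_int (sign p) * (\<Prod>i\<in>{..n}. Wm n F xs $$ (i, p i)))"
    unfolding det_def'[OF Wm_carrier] S ..
  also have "\<dots> = (\<Sum>p\<in>{p. p permutes {..n}}. of_int (sign p) * (\<Prod>i\<in>{..n}. F (p i) (xs ! i)))"
  proof (rule sum.cong[OF refl])
    fix p assume "p \<in> {p. p permutes {..n}}"
    then have p: "p permutes {..n}" by simp
    have "\<And>i. i \<in> {..n} \<Longrightarrow> Wm n F xs $$ (i, p i) = F (p i) (xs ! i)"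
    proof -
      fix i assume "i \<in> {..n}"
      then have "i < Suc n" "p i < Suc n" using permutes_in_image[OF p, of i] by (auto simp: less_Suc_eq_le)
      then show "Wm n F xs $$ (i, p i) = F (p i) (xs ! i)" by (simp add: Wm_def)
    qed
    then show "of_int (sign p) * (\<Prod>i\<in>{..n}. Wm n F xs $$ (i, p i)) = of_int (sign p) * (\<Prod>i\<in>{..n}. F (p i) (xs ! i))"
      by simp
  qed
  finally show ?thesis using len by (simp add: wedge_def)
qed

lemma wedge_cong:
  assumes "\<And>j. j \<le> n \<Longrightarrow> F j = G j"
  shows "wedge n F = wedge n G"
proof (rule ext)
  fix xs
  have "(\<Sum>p\<in>{p. p permutes {..n}}. of_int (sign p) * (\<Prod>i\<in>{..n}. F (p i) (xs ! i))) =
        (\<Sum>p\<in>{p. p permutes {..n}}. of_int (sign p) * (\<Prod>i\<in>{..n}. G (p i) (xs ! i)))"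
  proof (rule sum.cong[OF refl])
    fix p assume "p \<in> {p. p permutes {..n}}"
    then have p: "p permutes {..n}" by simp
    have "\<And>i. i \<in> {..n} \<Longrightarrow> F (p i) (xs ! i) = G (p i) (xs ! i)"
      using permutes_in_image[OF p] assms by auto
    then show "of_int (sign p) * (\<Prod>i\<in>{..n}. F (p i) (xs ! i)) = of_int (sign p) * (\<Prod>i\<in>{..n}. G (p i) (xs ! i))"
      by simp
  qed
  then show "wedge n F xs = wedge n G xs" by (simp add: wedge_def)
qed

lemma W1: "wedge (Suc m) F xs = star (F 0) (wedge m (\<lambda>j. F (Suc j))) xs"
proof (cases "length xs = Suc (Suc m)")
  case True
  let ?A = "Wm (Suc m) F xs"
  have "wedge (Suc m) F xs = det ?A" using wedge_det True by blast
  also have "\<dots> = (\<Sum>i<Suc (Suc m). ?A $$ (i, 0) * cofactor ?A i 0)"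
    by (rule laplace_expansion_column[OF Wm_carrier]) simp
  also have "\<dots> = (\<Sum>i<length xs. (-1)^i * F 0 (xs ! i) * wedge m (\<lambda>j. F (Suc j)) (omit i xs))"
  proof (rule sum.cong)
    show "{..<Suc (Suc m)} = {..<length xs}" using True by simp
  next
    fix i assume i: "i \<in> {..<length xs}"
    have lo: "length (omit i xs) = Suc m" using True i by (simp add: length_omit)
    have "mat_delete ?A i 0 = Wm m (\<lambda>j. F (Suc j)) (omit i xs)"
      by (rule eq_matI) (use True i in \<open>auto simp: mat_delete_def Wm_def nth_omit\<close>)
    then show "?A $$ (i, 0) * cofactor ?A i 0 = (-1)^i * F 0 (xs ! i) * wedge m (\<lambda>j. F (Suc j)) (omit i xs)"
      using i True wedge_det[OF lo] by (simp add: cofactor_def Wm_def)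
  qed
  finally show ?thesis by (simp add: star_def)
next
  case False
  have "star (F 0) (wedge m (\<lambda>j. F (Suc j))) xs = 0"
    unfolding star_def
    by (rule sum.neutral) (use False in \<open>auto simp: wedge_len length_omit\<close>)
  then show ?thesis using False by (simp add: wedge_len)
qed

lemma W1': "star f (wedge m F) xs = wedge (Suc m) (\<lambda>j. if j = 0 then f else F (j - 1)) xs"
  by (simp add: W1)

lemma Wswap: "wedge (Suc m) (\<lambda>j. if j = 0 then F 1 else if j = 1 then F 0 else F j) xs = - wedge (Suc m) F xs"
proof (cases "length xs = Suc (Suc m)")
  case True
  have "Wm (Suc m) (\<lambda>j. if j = 0 then F 1 else if j = 1 then F 0 else F j) xs = swapcols 0 1 (Wm (Suc m) F xs)"
    by (rule eq_matI) (auto simp: Wm_def mat_swapcols_def)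
  moreover have "det (swapcols 0 1 (Wm (Suc m) F xs)) = - det (Wm (Suc m) F xs)"
    by (rule det_swapcols[OF _ _ _ Wm_carrier]) auto
  ultimately show ?thesis using True by (simp add: wedge_det)
qed (simp add: wedge_len)

lemma Wadd: "wedge (Suc m) (F(1 := (\<lambda>x. F 1 x + F 0 x))) xs = wedge (Suc m) F xs"
proof (cases "length xs = Suc (Suc m)")
  case True
  have "Wm (Suc m) (F(1 := (\<lambda>x. F 1 x + F 0 x))) xs = addcol 1 1 0 (Wm (Suc m) F xs)"
    by (rule eq_matI) (auto simp: Wm_def mat_addcol_def)
  moreover have "det (addcol 1 1 0 (Wm (Suc m) F xs)) = det (Wm (Suc m) F xs)"
    by (rule det_addcol[OF _ _ Wm_carrier]) auto
  ultimately show ?thesis using True by (simp add: wedge_det)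
qed (simp add: wedge_len)

lemma Weq: "F 1 = F 0 \<Longrightarrow> wedge (Suc m) F xs = 0"
proof (cases "length xs = Suc (Suc m)")
  case True
  assume e0: "F 1 = F 0"
  then have e: "F (Suc 0) = F 0" by simp
  have "col (Wm (Suc m) F xs) 0 = col (Wm (Suc m) F xs) 1"
    by (rule eq_vecI) (auto simp: Wm_def e)
  then have "det (Wm (Suc m) F xs) = 0"
    by (intro det_identical_columns[OF Wm_carrier, of 0 1]) auto
  then show ?thesis using True by (simp add: wedge_det)
qed (simp add: wedge_len)

definition PP :: "'a set list \<Rightarrow> 'a \<Rightarrow> complex" where
  "PP Ys x = prod_list (map (\<lambda>Y. ind Y x) Ys)"

definition AA :: "'a set list \<Rightarrow> nat \<Rightarrow> 'a \<Rightarrow> complex" where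
  "AA Ys i x = (if i = 0 then PP Ys x else ind (- (Ys ! (i - 1))) x * PP (drop i Ys) x)"

definition F1 :: "'a set list \<Rightarrow> nat \<Rightarrow> 'a \<Rightarrow> complex" where
  "F1 Ys i = (if i = 0 then (\<lambda>_. 1) else ind (Ys ! (i - 1)))"

definition th1 :: "'a set list \<Rightarrow> 'a list \<Rightarrow> complex" where
  "th1 Ys = wedge (length Ys) (F1 Ys)"

definition th2 :: "'a set list \<Rightarrow> 'a list \<Rightarrow> complex" where
  "th2 Ys = wedge (length Ys) (AA Ys)"

definition cc :: "nat \<Rightarrow> complex" where
  "cc n = (-1)^n * of_nat (fact n)"

lemma cc_Suc: "cc (Suc m) = - of_nat (Suc m) * cc m"
  by (simp add: cc_def algebra_simps)

lemma PP_01: "PP Zs x = (if \<forall>Y\<in>set Zs. x \<in> Y then 1 else 0)"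
  by (induction Zs) (auto simp: PP_def ind_def)

lemma PP_Cons: "PP (Y # Zs) x = ind Y x * PP Zs x"
  by (simp add: PP_def)

lemma ind_compl: "ind (- Y) x + ind Y x = 1"
  by (simp add: ind_def indicator_def)

lemma R1: "th1 (Y # Zs) xs = - star (ind Y) (th1 Zs) xs"
proof -
  let ?F = "F1 (Y # Zs)"
  let ?G = "\<lambda>j. if j = 0 then ?F 1 else if j = 1 then ?F 0 else ?F j"
  have "th1 (Y # Zs) xs = - wedge (Suc (length Zs)) ?G xs"
    using Wswap[of "length Zs" ?F xs] by (simp add: th1_def)
  also have "wedge (Suc (length Zs)) ?G xs = star (?G 0) (wedge (length Zs) (\<lambda>j. ?G (Suc j))) xs"
    by (rule W1)
  also have "(\<lambda>j. ?G (Suc j)) = F1 Zs"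
    by (rule ext) (auto simp: F1_def)
  also have "?G 0 = ind Y" by (simp add: F1_def)
  finally show ?thesis by (simp add: th1_def)
qed

lemma R2: "th2 (Y # Zs) xs = star (\<lambda>x. ind Y x * PP Zs x) (th2 Zs) xs"
proof -
  let ?F = "AA (Y # Zs)"
  let ?G = "?F(1 := (\<lambda>x. ?F 1 x + ?F 0 x))"
  have "th2 (Y # Zs) xs = wedge (Suc (length Zs)) ?G xs"
    using Wadd[of "length Zs" ?F xs] by (simp add: th2_def)
  also have "\<dots> = star (?G 0) (wedge (length Zs) (\<lambda>j. ?G (Suc j))) xs"
    by (rule W1)
  also have "(\<lambda>j. ?G (Suc j)) = AA Zs"
  proof (rule ext)
    fix j show "?G (Suc j) = AA Zs j"
    proof (cases j)
      case 0
      have "ind (- Y) x * PP Zs x + ind Y x * PP Zs x = PP Zs x" for x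
      proof -
        have "ind (- Y) x * PP Zs x + ind Y x * PP Zs x = (ind (- Y) x + ind Y x) * PP Zs x"
          by (simp add: algebra_simps)
        then show ?thesis using ind_compl[of Y x] by simp
      qed
      then show ?thesis using 0 by (auto simp: AA_def PP_Cons)
    next
      case (Suc k)
      then show ?thesis by (auto simp: AA_def)
    qed
  qed
  also have "?G 0 = (\<lambda>x. ind Y x * PP Zs x)" by (rule ext) (simp add: AA_def PP_Cons)
  finally show ?thesis by (simp add: th2_def)
qed

lemma PP_AA: "j \<le> length Zs \<Longrightarrow> PP Zs x * AA Zs j x = (if j = 0 then AA Zs j x else 0)"
proof (cases "j = 0")
  case True
  then show ?thesis by (simp add: AA_def PP_01)
next
  case False
  assume j: "j \<le> length Zs"
  then have "Zs ! (j - 1) \<in> set Zs" using False by simp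
  then show ?thesis using False by (auto simp: AA_def PP_01 ind_def)
qed

lemma ssum_nth: "ssum f xs = (\<Sum>i<length xs. f (xs ! i))"
  by (simp add: ssum_def sum_list_sum_nth atLeast0LessThan)

lemma R4: "ssum (PP Zs) xs * th2 Zs xs = th2 Zs xs"
proof (cases "length xs = Suc (length Zs)")
  case False
  then show ?thesis by (simp add: th2_def wedge_len)
next
  case True
  let ?m = "length Zs"
  have key: "ssum (PP Zs) xs * (\<Prod>i\<in>{..?m}. AA Zs (p i) (xs ! i)) = (\<Prod>i\<in>{..?m}. AA Zs (p i) (xs ! i))"
    if p: "p permutes {..?m}" for p
  proof -
    have pin: "p i \<le> ?m" if "i \<le> ?m" for i using permutes_in_image[OF p, of i] that by simp
    have tm: "PP Zs (xs ! k) * (\<Prod>i\<in>{..?m}. AA Zs (p i) (xs ! i)) =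
        (if k = Hilbert_Choice.inv p 0 then (\<Prod>i\<in>{..?m}. AA Zs (p i) (xs ! i)) else 0)" if k: "k \<le> ?m" for k
    proof -
      have "(\<Prod>i\<in>{..?m}. AA Zs (p i) (xs ! i)) = AA Zs (p k) (xs ! k) * (\<Prod>i\<in>{..?m} - {k}. AA Zs (p i) (xs ! i))"
        using k by (simp add: prod.remove)
      moreover have "(k = Hilbert_Choice.inv p 0) = (p k = 0)" using permutes_inv_eq[OF p] by metis
      ultimately show ?thesis
        using PP_AA[OF pin[OF k], of "xs ! k"] by (simp add: mult.assoc[symmetric])
    qed
    have i0: "Hilbert_Choice.inv p 0 \<le> ?m"
      using permutes_inv[OF p] permutes_in_image by fastforce
    have "ssum (PP Zs) xs * (\<Prod>i\<in>{..?m}. AA Zs (p i) (xs ! i)) =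
        (\<Sum>k\<in>{..?m}. PP Zs (xs ! k) * (\<Prod>i\<in>{..?m}. AA Zs (p i) (xs ! i)))"
      using True by (simp add: ssum_nth sum_distrib_right lessThan_Suc_atMost)
    also have "\<dots> = (\<Sum>k\<in>{..?m}. if k = Hilbert_Choice.inv p 0 then (\<Prod>i\<in>{..?m}. AA Zs (p i) (xs ! i)) else 0)"
      by (rule sum.cong) (auto simp: tm)
    also have "\<dots> = (\<Prod>i\<in>{..?m}. AA Zs (p i) (xs ! i))"
      using i0 by simp
    finally show ?thesis .
  qed
  have "ssum (PP Zs) xs * th2 Zs xs =
      (\<Sum>p\<in>{p. p permutes {..?m}}. of_int (sign p) * (ssum (PP Zs) xs * (\<Prod>i\<in>{..?m}. AA Zs (p i) (xs ! i))))"
    using True by (simp add: th2_def wedge_def sum_distrib_left algebra_simps)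
  also have "\<dots> = (\<Sum>p\<in>{p. p permutes {..?m}}. of_int (sign p) * (\<Prod>i\<in>{..?m}. AA Zs (p i) (xs ! i)))"
    by (rule sum.cong) (auto simp: key)
  also have "\<dots> = th2 Zs xs"
    using True by (simp add: th2_def wedge_def)
  finally show ?thesis .
qed
section \<open>Transversality-null and pattern-determined cochains\<close>

definition TN :: "'a set list \<Rightarrow> ('a list \<Rightarrow> complex) \<Rightarrow> bool" where
  "TN Ys \<phi> \<longleftrightarrow> (\<forall>xs. (\<exists>Y\<in>set Ys. (\<forall>x\<in>set xs. x \<in> Y) \<or> (\<forall>x\<in>set xs. x \<notin> Y)) \<longrightarrow> \<phi> xs = 0)"

definition PD :: "'a set list \<Rightarrow> ('a list \<Rightarrow> complex) \<Rightarrow> bool" where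
  "PD Ys \<phi> \<longleftrightarrow> (\<forall>xs ys. length xs = length ys \<longrightarrow>
      (\<forall>i<length xs. \<forall>Y\<in>set Ys. (xs ! i \<in> Y) = (ys ! i \<in> Y)) \<longrightarrow> \<phi> xs = \<phi> ys)"

lemma TN_Dc: "TN Ys \<phi> \<Longrightarrow> TN Ys (Dc \<phi>)"
  unfolding TN_def Dc_def
proof (intro allI impI)
  fix xs assume T: "\<forall>xs. (\<exists>Y\<in>set Ys. (\<forall>x\<in>set xs. x \<in> Y) \<or> (\<forall>x\<in>set xs. x \<notin> Y)) \<longrightarrow> \<phi> xs = 0"
    and c: "\<exists>Y\<in>set Ys. (\<forall>x\<in>set xs. x \<in> Y) \<or> (\<forall>x\<in>set xs. x \<notin> Y)"
  have "\<phi> (omit i xs) = 0" for i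
    using c set_omit[of i xs] T by blast
  then show "(\<Sum>i<length xs. (- 1) ^ i * \<phi> (omit i xs)) = 0" by simp
qed

lemma set_tl_sub: "set (tl xs) \<subseteq> set xs"
  by (cases xs) auto

lemma TN_cup1:
  assumes T: "TN Zs \<phi>" and e: "\<phi> [] = 0"
  shows "TN (Y # Zs) (cup1 (ind Y) \<phi>)"
  unfolding TN_def
proof (intro allI impI)
  fix xs assume c: "\<exists>Y'\<in>set (Y # Zs). (\<forall>x\<in>set xs. x \<in> Y') \<or> (\<forall>x\<in>set xs. x \<notin> Y')"
  show "cup1 (ind Y) \<phi> xs = 0"
  proof (cases "length xs \<ge> 2")
    case False
    then have "length (tl xs) = 0" by simp
    then have "tl xs = []" by blast
    then show ?thesis using e by (simp add: cup1_def)
  next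
    case True
    then have m: "xs ! 0 \<in> set xs" "xs ! 1 \<in> set xs" by (auto intro!: nth_mem)
    from c obtain Y' where Y': "Y' \<in> set (Y # Zs)" "(\<forall>x\<in>set xs. x \<in> Y') \<or> (\<forall>x\<in>set xs. x \<notin> Y')" by blast
    show ?thesis
    proof (cases "Y' = Y")
      case True
      then have "ind Y (xs ! 1) = ind Y (xs ! 0)" using Y'(2) m by (auto simp: ind_def)
      then show ?thesis by (simp add: cup1_def)
    next
      case False
      then have "Y' \<in> set Zs" using Y' by simp
      then have "\<phi> (tl xs) = 0" using T Y'(2) set_tl_sub[of xs] unfolding TN_def by blast
      then show ?thesis by (simp add: cup1_def)
    qed
  qed
qed

lemma ssum_const: "(\<And>x. x \<in> set xs \<Longrightarrow> f x = c) \<Longrightarrow> ssum f xs = of_nat (length xs) * c"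
  by (induction xs) (auto simp: ssum_def algebra_simps)

lemma ssum_cmult: "(\<And>x. x \<in> set xs \<Longrightarrow> f x = c * g x) \<Longrightarrow> ssum f xs = c * ssum g xs"
  by (induction xs) (auto simp: ssum_def algebra_simps)

lemma ind_const:
  assumes "(\<forall>x\<in>set xs. x \<in> Y) \<or> (\<forall>x\<in>set xs. x \<notin> Y)" "xs \<noteq> []"
  shows "\<And>x. x \<in> set xs \<Longrightarrow> ind Y x = ind Y (hd xs)"
  using assms hd_in_set[OF assms(2)] by (auto simp: ind_def)

lemma PD_wedge:
  assumes "\<And>j x y. j \<le> n \<Longrightarrow> (\<forall>Y\<in>set Ys. (x \<in> Y) = (y \<in> Y)) \<Longrightarrow> F j x = F j y"
  shows "PD Ys (wedge n F)"
  unfolding PD_def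
proof (intro allI impI)
  fix xs ys :: "'a list"
  assume l: "length xs = length ys" and m: "\<forall>i<length xs. \<forall>Y\<in>set Ys. (xs ! i \<in> Y) = (ys ! i \<in> Y)"
  show "wedge n F xs = wedge n F ys"
  proof (cases "length xs = Suc n")
    case False
    then show ?thesis using l by (simp add: wedge_len)
  next
    case True
    have "(\<Sum>p\<in>{p. p permutes {..n}}. of_int (sign p) * (\<Prod>i\<in>{..n}. F (p i) (xs ! i))) =
          (\<Sum>p\<in>{p. p permutes {..n}}. of_int (sign p) * (\<Prod>i\<in>{..n}. F (p i) (ys ! i)))"
    proof (rule sum.cong[OF refl])
      fix p assume "p \<in> {p. p permutes {..n}}"
      then have p: "p permutes {..n}" by simp
      have "\<And>i. i \<in> {..n} \<Longrightarrow> F (p i) (xs ! i) = F (p i) (ys ! i)"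
      proof -
        fix i assume i: "i \<in> {..n}"
        then have "p i \<le> n" using permutes_in_image[OF p, of i] by simp
        moreover have "i < length xs" using i True by simp
        ultimately show "F (p i) (xs ! i) = F (p i) (ys ! i)" using assms m by blast
      qed
      then show "of_int (sign p) * (\<Prod>i\<in>{..n}. F (p i) (xs ! i)) = of_int (sign p) * (\<Prod>i\<in>{..n}. F (p i) (ys ! i))"
        by simp
    qed
    then show ?thesis using True l by (simp add: wedge_def)
  qed
qed

lemma PP_cong:
  assumes "set Zs \<subseteq> set Ys" "\<forall>Y\<in>set Ys. (x \<in> Y) = (y \<in> Y)"
  shows "PP Zs x = PP Zs y"
proof -
  have "(\<forall>Y\<in>set Zs. x \<in> Y) = (\<forall>Y\<in>set Zs. y \<in> Y)" using assms by blast
  then show ?thesis by (simp only: PP_01)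
qed

lemma ind_cong:
  assumes "Y \<in> set Ys" "\<forall>Y\<in>set Ys. (x \<in> Y) = (y \<in> Y)"
  shows "ind Y x = ind Y y"
proof -
  have "(x \<in> Y) = (y \<in> Y)" using assms by blast
  then show ?thesis by (simp add: ind_def indicator_def)
qed

lemma PD_th1: "PD Ys (th1 Ys)"
  unfolding th1_def
proof (rule PD_wedge)
  fix j x y assume j: "j \<le> length Ys" and e: "\<forall>Y\<in>set Ys. (x \<in> Y) = (y \<in> Y)"
  show "F1 Ys j x = F1 Ys j y"
  proof (cases "j = 0")
    case True
    then show ?thesis by (simp add: F1_def)
  next
    case False
    then have "Ys ! (j - 1) \<in> set Ys" using j by simp
    then show ?thesis using False ind_cong[OF _ e] by (simp add: F1_def)
  qed
qed

lemma PD_th2: "PD Ys (th2 Ys)"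
  unfolding th2_def
proof (rule PD_wedge)
  fix j x y assume j: "j \<le> length Ys" and e: "\<forall>Y\<in>set Ys. (x \<in> Y) = (y \<in> Y)"
  show "AA Ys j x = AA Ys j y"
  proof (cases "j = 0")
    case True
    then show ?thesis using PP_cong[OF subset_refl e] by (simp add: AA_def)
  next
    case False
    then have "Ys ! (j - 1) \<in> set Ys" using j by simp
    then have "(x \<in> Ys ! (j - 1)) = (y \<in> Ys ! (j - 1))" using e by blast
    then have "ind (- (Ys ! (j - 1))) x = ind (- (Ys ! (j - 1))) y" by (simp add: ind_def indicator_def)
    moreover have "PP (drop j Ys) x = PP (drop j Ys) y" using PP_cong[OF set_drop_subset e] .
    ultimately show ?thesis using False by (simp add: AA_def)
  qed
qed

lemma PD_mono:
  assumes "PD Zs \<phi>" "set Zs \<subseteq> set Ys"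
  shows "PD Ys \<phi>"
  unfolding PD_def
proof (intro allI impI)
  fix xs ys :: "'a list"
  assume l: "length xs = length ys" and m: "\<forall>i<length xs. \<forall>Y\<in>set Ys. (xs ! i \<in> Y) = (ys ! i \<in> Y)"
  then have "\<forall>i<length xs. \<forall>Y\<in>set Zs. (xs ! i \<in> Y) = (ys ! i \<in> Y)" using assms(2) by blast
  then show "\<phi> xs = \<phi> ys" using assms(1) l unfolding PD_def by blast
qed

lemma Dc_uminus: "Dc (\<lambda>zs. - f zs) xs = - Dc f xs"
  using Dc_cmult[of "-1" f xs] by simp

lemma th_Nil_len: "th1 Zs [] = 0" "th2 Zs [] = 0"
  by (simp_all add: th1_def th2_def wedge_len)

lemma main:
  fixes Ys :: "'a set list"
  shows "(\<forall>xs. Dc (th1 Ys) xs = 0) \<and> (\<forall>xs. Dc (th2 Ys) xs = 0) \<and> TN Ys (th1 Ys) \<and> TN Ys (th2 Ys) \<and>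
    (\<exists>\<psi>. (\<forall>xs. Dc \<psi> xs = th1 Ys xs - cc (length Ys) * th2 Ys xs) \<and> TN Ys \<psi> \<and> PD Ys \<psi> \<and>
         (\<forall>xs. length xs \<noteq> length Ys \<longrightarrow> \<psi> xs = 0) \<and> \<psi> [] = 0)"
proof (induction Ys)
  case Nil
  have f: "F1 [] 0 = AA [] 0" by (rule ext) (simp add: F1_def AA_def PP_def)
  have e: "th1 [] = th2 []" unfolding th1_def th2_def
    by (rule wedge_cong) (use f in simp)
  have c1: "Dc (th1 []) xs = 0" for xs :: "'a list"
  proof -
    have "Dc (th1 []) xs = wedge (Suc 0) (\<lambda>j. if j = 0 then (\<lambda>_. 1) else F1 [] (j - 1)) xs"
      unfolding Dc_star1 th1_def list.size W1' by simp
    also have "\<dots> = 0" by (rule Weq) (simp add: F1_def)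
    finally show ?thesis .
  qed
  have "(\<forall>xs. Dc (\<lambda>_. 0) xs = th1 [] xs - cc (length []) * th2 [] xs)"
    by (simp add: cc_def Dc_zero e)
  moreover have c2: "Dc (th2 []) xs = 0" for xs :: "'a list"
    using c1[of xs] unfolding e .
  ultimately show ?case using c1 by (auto simp: TN_def PD_def intro!: exI[of _ "\<lambda>_. 0"])
next
  case (Cons Y Zs)
  define m where "m = length Zs"
  define b1 where "b1 = th1 Zs"
  define b2 where "b2 = th2 Zs"
  have cb1: "\<And>xs. Dc b1 xs = 0" and cb2: "\<And>xs. Dc b2 xs = 0" and Tb1: "TN Zs b1" and Tb2: "TN Zs b2"
    using Cons.IH by (simp_all add: b1_def b2_def)
  obtain \<psi>' where p1: "\<And>xs. Dc \<psi>' xs = b1 xs - cc m * b2 xs" and p2: "TN Zs \<psi>'" and p3: "PD Zs \<psi>'"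
    and p4: "\<And>xs. length xs \<noteq> m \<Longrightarrow> \<psi>' xs = 0" and p5: "\<psi>' [] = 0"
    using Cons.IH unfolding b1_def b2_def m_def by blast
  have b1n: "b1 [] = 0" and b2n: "b2 [] = 0" by (simp_all add: b1_def b2_def th_Nil_len)
  have b1l: "\<And>xs. length xs \<noteq> Suc m \<Longrightarrow> b1 xs = 0" by (simp add: b1_def th1_def wedge_len m_def)
  have b2l: "\<And>xs. length xs \<noteq> Suc m \<Longrightarrow> b2 xs = 0" by (simp add: b2_def th2_def wedge_len m_def)
  have R4': "\<And>xs. ssum (PP Zs) xs * b2 xs = b2 xs" unfolding b2_def by (rule R4)

  define H1 where "H1 = (\<lambda>xs. ssum (ind Y) xs * b1 xs - of_nat (Suc m) * (ind Y (hd xs) * b1 xs))"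
  define H2 where "H2 = (\<lambda>xs. ssum (\<lambda>x. ind Y x * PP Zs x) xs * b2 xs - ind Y (hd xs) * b2 xs)"
  define \<psi> where "\<psi> = (\<lambda>xs. H1 xs - of_nat (Suc m) * cc m * H2 xs - of_nat (Suc m) * cup1 (ind Y) \<psi>' xs)"

  have E1: "Dc H1 xs = th1 (Y # Zs) xs - of_nat (Suc m) * cup1 (ind Y) b1 xs" for xs
  proof -
    have "Dc H1 xs = Dc (\<lambda>xs. ssum (ind Y) xs * b1 xs) xs - of_nat (Suc m) * Dc (\<lambda>xs. ind Y (hd xs) * b1 xs) xs"
      unfolding H1_def Dc_diff Dc_cmult ..
    also have "\<dots> = - star (ind Y) b1 xs - of_nat (Suc m) * (cup1 (ind Y) b1 xs + ind Y (hd xs) * Dc b1 xs)"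
      by (simp add: L1[OF cb1] L2[where \<beta>=b1, OF b1n])
    also have "\<dots> = th1 (Y # Zs) xs - of_nat (Suc m) * cup1 (ind Y) b1 xs"
      by (simp add: cb1 cb1[unfolded b1_def] R1 b1_def)
    finally show ?thesis .
  qed
  have E2: "Dc H2 xs = - th2 (Y # Zs) xs - cup1 (ind Y) b2 xs" for xs
  proof -
    have "Dc H2 xs = Dc (\<lambda>xs. ssum (\<lambda>x. ind Y x * PP Zs x) xs * b2 xs) xs - Dc (\<lambda>xs. ind Y (hd xs) * b2 xs) xs"
      unfolding H2_def Dc_diff ..
    also have "\<dots> = - star (\<lambda>x. ind Y x * PP Zs x) b2 xs - (cup1 (ind Y) b2 xs + ind Y (hd xs) * Dc b2 xs)"
      by (simp add: L1[OF cb2] L2[where \<beta>=b2, OF b2n])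
    also have "\<dots> = - th2 (Y # Zs) xs - cup1 (ind Y) b2 xs"
      by (simp add: cb2 cb2[unfolded b2_def] R2 b2_def)
    finally show ?thesis .
  qed
  have E3: "Dc (cup1 (ind Y) \<psi>') xs = - (cup1 (ind Y) b1 xs - cc m * cup1 (ind Y) b2 xs)" for xs
    using Lcup[where \<phi>=\<psi>', OF p5, of "ind Y" xs] p1 by (simp add: cup1_def algebra_simps)
  have Dpsi: "Dc \<psi> xs = th1 (Y # Zs) xs - cc (length (Y # Zs)) * th2 (Y # Zs) xs" for xs
  proof -
    have "Dc \<psi> xs = Dc H1 xs - of_nat (Suc m) * cc m * Dc H2 xs - of_nat (Suc m) * Dc (cup1 (ind Y) \<psi>') xs"
      unfolding \<psi>_def Dc_diff Dc_cmult ..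
    also have "\<dots> = th1 (Y # Zs) xs + of_nat (Suc m) * cc m * th2 (Y # Zs) xs"
      unfolding E1 E2 E3 by (simp add: algebra_simps)
    also have "\<dots> = th1 (Y # Zs) xs - cc (length (Y # Zs)) * th2 (Y # Zs) xs"
      by (simp add: cc_Suc m_def algebra_simps)
    finally show ?thesis .
  qed
  have th1r: "th1 (Y # Zs) = (\<lambda>xs. Dc H1 xs + of_nat (Suc m) * cup1 (ind Y) b1 xs)"
    by (rule ext) (simp add: E1)
  have th2r: "th2 (Y # Zs) = (\<lambda>xs. - Dc H2 xs - cup1 (ind Y) b2 xs)"
    by (rule ext) (simp add: E2)
  have cupz: "cup1 f (Dc b) xs = 0" if "\<And>zs. Dc b zs = 0" for f b xs
    using that by (simp add: cup1_def)
  have C1: "Dc (th1 (Y # Zs)) xs = 0" for xs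
    unfolding th1r Dc_add Dc_cmult DD Lcup[where \<phi>=b1, OF b1n] using cupz[OF cb1] by simp
  have C2: "Dc (th2 (Y # Zs)) xs = 0" for xs
    unfolding th2r Dc_diff Dc_uminus DD Lcup[where \<phi>=b2, OF b2n] using cupz[OF cb2] by simp

  have TH1: "TN (Y # Zs) H1"
    unfolding TN_def
  proof (intro allI impI)
    fix xs assume c: "\<exists>Y'\<in>set (Y # Zs). (\<forall>x\<in>set xs. x \<in> Y') \<or> (\<forall>x\<in>set xs. x \<notin> Y')"
    then obtain Y' where Y': "Y' \<in> set (Y # Zs)" "(\<forall>x\<in>set xs. x \<in> Y') \<or> (\<forall>x\<in>set xs. x \<notin> Y')" by blast
    show "H1 xs = 0"
    proof (cases "Y' = Y")
      case False
      then have "b1 xs = 0" using Y' Tb1 unfolding TN_def by auto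
      then show ?thesis by (simp add: H1_def)
    next
      case True
      show ?thesis
      proof (cases "length xs = Suc m")
        case False
        then show ?thesis by (simp add: H1_def b1l)
      next
        case ln: True
        then have ne: "xs \<noteq> []" by auto
        have "ssum (ind Y) xs = of_nat (length xs) * ind Y (hd xs)"
          by (rule ssum_const) (use ind_const[OF Y'(2)[unfolded True] ne] in blast)
        then show ?thesis using ln by (simp add: H1_def)
      qed
    qed
  qed
  have TH2: "TN (Y # Zs) H2"
    unfolding TN_def
  proof (intro allI impI)
    fix xs assume c: "\<exists>Y'\<in>set (Y # Zs). (\<forall>x\<in>set xs. x \<in> Y') \<or> (\<forall>x\<in>set xs. x \<notin> Y')"
    then obtain Y' where Y': "Y' \<in> set (Y # Zs)" "(\<forall>x\<in>set xs. x \<in> Y') \<or> (\<forall>x\<in>set xs. x \<notin> Y')" by blast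
    show "H2 xs = 0"
    proof (cases "Y' = Y")
      case False
      then have "b2 xs = 0" using Y' Tb2 unfolding TN_def by auto
      then show ?thesis by (simp add: H2_def)
    next
      case True
      show ?thesis
      proof (cases "xs = []")
        case True
        then show ?thesis by (simp add: H2_def b2n)
      next
        case ne: False
        have "ssum (\<lambda>x. ind Y x * PP Zs x) xs = ind Y (hd xs) * ssum (PP Zs) xs"
          by (rule ssum_cmult) (use ind_const[OF Y'(2)[unfolded True] ne] in simp)
        then have "H2 xs = ind Y (hd xs) * (ssum (PP Zs) xs * b2 xs) - ind Y (hd xs) * b2 xs"
          by (simp add: H2_def)
        then show ?thesis using R4' by simp
      qed
    qed
  qed
  have TC1: "TN (Y # Zs) (cup1 (ind Y) b1)" by (rule TN_cup1[where \<phi>=b1, OF Tb1 b1n])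
  have TC2: "TN (Y # Zs) (cup1 (ind Y) b2)" by (rule TN_cup1[where \<phi>=b2, OF Tb2 b2n])
  have TC3: "TN (Y # Zs) (cup1 (ind Y) \<psi>')" by (rule TN_cup1[where \<phi>=\<psi>', OF p2 p5])
  have TD1: "TN (Y # Zs) (Dc H1)" by (rule TN_Dc[OF TH1])
  have TD2: "TN (Y # Zs) (Dc H2)" by (rule TN_Dc[OF TH2])
  have T1: "TN (Y # Zs) (th1 (Y # Zs))"
    using TD1 TC1 unfolding TN_def th1r by simp
  have T2: "TN (Y # Zs) (th2 (Y # Zs))"
    using TD2 TC2 unfolding TN_def th2r by simp
  have Tpsi: "TN (Y # Zs) \<psi>"
    using TH1 TH2 TC3 unfolding TN_def \<psi>_def by simp

  have Lpsi: "\<psi> xs = 0" if "length xs \<noteq> length (Y # Zs)" for xs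
  proof -
    have "length xs \<noteq> Suc m" using that by (simp add: m_def)
    moreover have "\<psi>' (tl xs) = 0"
    proof (cases xs)
      case Nil
      then show ?thesis using p5 by simp
    next
      case (Cons a l)
      then show ?thesis using p4 \<open>length xs \<noteq> Suc m\<close> by simp
    qed
    ultimately show ?thesis by (simp add: \<psi>_def H1_def H2_def b1l b2l cup1_def)
  qed

  have Ppsi: "PD (Y # Zs) \<psi>"
    unfolding PD_def
  proof (intro allI impI)
    fix xs ys :: "'a list"
    assume l: "length xs = length ys" and mm: "\<forall>i<length xs. \<forall>Y'\<in>set (Y # Zs). (xs ! i \<in> Y') = (ys ! i \<in> Y')"
    have sub: "set Zs \<subseteq> set (Y # Zs)" by auto
    have pb1: "b1 xs = b1 ys" using PD_mono[OF PD_th1 sub] l mm unfolding PD_def b1_def by blast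
    have pb2: "b2 xs = b2 ys" using PD_mono[OF PD_th2 sub] l mm unfolding PD_def b2_def by blast
    have iY: "ind Y (xs ! i) = ind Y (ys ! i)" if "i < length xs" for i
      using ind_cong[of Y "Y # Zs" "xs ! i" "ys ! i"] mm that by simp
    have iP: "PP Zs (xs ! i) = PP Zs (ys ! i)" if "i < length xs" for i
      using PP_cong[OF sub, of "xs ! i" "ys ! i"] mm that by simp
    have s1: "ssum (ind Y) xs = ssum (ind Y) ys"
      unfolding ssum_nth using l iY by (intro sum.cong) auto
    have s2: "ssum (\<lambda>x. ind Y x * PP Zs x) xs = ssum (\<lambda>x. ind Y x * PP Zs x) ys"
      unfolding ssum_nth using l iY iP by (intro sum.cong) auto
    have hh: "ind Y (hd xs) * b1 xs = ind Y (hd ys) * b1 ys \<and> ind Y (hd xs) * b2 xs = ind Y (hd ys) * b2 ys"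
    proof (cases "xs = []")
      case True
      then show ?thesis using l by simp
    next
      case False
      moreover have "ys \<noteq> []" using False l by auto
      ultimately have "ind Y (hd xs) = ind Y (hd ys)" using iY[of 0] by (simp add: hd_conv_nth)
      then show ?thesis using pb1 pb2 by simp
    qed
    have cp: "cup1 (ind Y) \<psi>' xs = cup1 (ind Y) \<psi>' ys"
    proof (cases "length xs \<ge> 2")
      case False
      then have "tl xs = []" "tl ys = []" using l by (auto simp: length_0_conv[symmetric])
      then show ?thesis using p5 by (simp add: cup1_def)
    next
      case True
      have "\<psi>' (tl xs) = \<psi>' (tl ys)"
        using p3 l mm unfolding PD_def by (auto simp: nth_tl)
      moreover have "ind Y (xs ! 0) = ind Y (ys ! 0)" "ind Y (xs ! 1) = ind Y (ys ! 1)"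
      proof -
        have "0 < length xs" "1 < length xs" using True by auto
        then show "ind Y (xs ! 0) = ind Y (ys ! 0)" "ind Y (xs ! 1) = ind Y (ys ! 1)"
          using iY by blast+
      qed
      ultimately show ?thesis by (simp add: cup1_def)
    qed
    have hh1: "ind Y (hd xs) * b1 xs = ind Y (hd ys) * b1 ys" and hh2: "ind Y (hd xs) * b2 xs = ind Y (hd ys) * b2 ys"
      using hh by blast+
    have "H1 xs = H1 ys" unfolding H1_def by (simp only: s1 hh1, simp only: pb1)
    moreover have "H2 xs = H2 ys" unfolding H2_def by (simp only: s2 hh2, simp only: pb2)
    ultimately show "\<psi> xs = \<psi> ys"
      unfolding \<psi>_def using cp by simp
  qed
  show ?case
    using C1 C2 T1 T2 Dpsi Tpsi Ppsi Lpsi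
    by (intro conjI allI exI[of _ \<psi>]) (auto simp: Lpsi)
qed

lemma TN_bounded:
  fixes \<phi> :: "'a::metric_space list \<Rightarrow> complex"
  assumes T: "TN Ys \<phi>" and L: "\<forall>xs. length xs \<noteq> Suc k \<longrightarrow> \<phi> xs = 0"
    and B: "\<forall>R\<ge>0. bounded (\<Inter>Y\<in>set Ys. thick Y R \<inter> thick (- Y) R)"
  shows "bounded_tuples ({xs. \<phi> xs \<noteq> 0} \<inter> diag_thick k R)"
proof (cases "R \<ge> 0")
  case False
  have "diag_thick k R = ({} :: 'a list set)"
  proof (rule equals0I)
    fix xs :: "'a list" assume "xs \<in> diag_thick k R"
    then obtain x where "\<forall>i<Suc k. dist (xs ! i) x \<le> R" unfolding diag_thick_def by blast
    then have "dist (xs ! 0) x \<le> R" by blast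
    then show False using False zero_le_dist[of "xs ! 0" x] by linarith
  qed
  then show ?thesis by (simp add: bounded_tuples_def)
next
  case True
  let ?S = "\<Inter>Y\<in>set Ys. thick Y R \<inter> thick (- Y) R"
  have bS: "bounded ?S" using B True by blast
  have ex: "\<exists>c r. \<forall>y\<in>?S. dist c y \<le> r" using bS by (simp only: bounded_def)
  then obtain c r where cr0: "\<forall>y\<in>?S. dist c y \<le> r" by (elim exE)
  have cr: "\<And>y. y \<in> ?S \<Longrightarrow> dist c y \<le> r" by (rule bspec[OF cr0])
  show ?thesis
    unfolding bounded_tuples_def
  proof (rule exI[of _ c], rule exI[of _ "R + r"], intro ballI allI impI)
    fix xs i assume xs: "xs \<in> {xs. \<phi> xs \<noteq> 0} \<inter> diag_thick k R" and i: "i < length xs"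
    have nz: "\<phi> xs \<noteq> 0" using xs by simp
    have dt: "xs \<in> diag_thick k R" using xs by simp
    have len: "length xs = Suc k" using dt unfolding diag_thick_def by simp
    have "\<exists>x. \<forall>i<Suc k. dist (xs ! i) x \<le> R" using dt unfolding diag_thick_def by simp
    then obtain x where x0: "\<forall>i<Suc k. dist (xs ! i) x \<le> R" by (elim exE)
    have x: "\<And>i. i < Suc k \<Longrightarrow> dist (xs ! i) x \<le> R" using x0 by simp
    have near: "infdist x Z \<le> R" if "z \<in> set xs" "z \<in> Z" for z Z
    proof -
      have "\<exists>j<length xs. xs ! j = z" using that(1) by (simp add: in_set_conv_nth)
      then obtain j where j0: "j < length xs" "xs ! j = z" by blast
      then have j: "j < length xs" "z = xs ! j" by simp_all
      have "infdist x Z \<le> dist x z" by (rule infdist_le[OF that(2)])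
      also have "\<dots> = dist (xs ! j) x" using j by (simp add: dist_commute)
      also have "\<dots> \<le> R" using x j len by simp
      finally show ?thesis .
    qed
    have inS: "x \<in> ?S"
    proof (rule INT_I)
      fix Y assume Y: "Y \<in> set Ys"
      have TT: "\<phi> xs = 0" if "(\<forall>z\<in>set xs. z \<in> Y) \<or> (\<forall>z\<in>set xs. z \<notin> Y)"
      proof -
        have "\<exists>Y\<in>set Ys. (\<forall>z\<in>set xs. z \<in> Y) \<or> (\<forall>z\<in>set xs. z \<notin> Y)" using Y that by blast
        then show ?thesis using T unfolding TN_def by simp
      qed
      obtain z1 where z1: "z1 \<in> set xs" "z1 \<in> Y" using TT nz by blast
      obtain z2 where z2: "z2 \<in> set xs" "z2 \<in> - Y" using TT nz by blast
      have "Y \<noteq> {}" "- Y \<noteq> {}" using z1 z2 by auto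
      moreover have "infdist x Y \<le> R" by (rule near[OF z1])
      moreover have "infdist x (- Y) \<le> R" by (rule near[OF z2])
      ultimately show "x \<in> thick Y R \<inter> thick (- Y) R" unfolding thick_def by simp
    qed
    have "dist c x \<le> r" using cr[OF inS] .
    moreover have "dist (xs ! i) x \<le> R" using x i len by simp
    ultimately show "dist (xs ! i) c \<le> R + r"
      using dist_triangle[of "xs ! i" c x] by (simp add: dist_commute)
  qed
qed

definition pat :: "'a set list \<Rightarrow> 'a list \<Rightarrow> bool list list" where
  "pat Ys xs = map (\<lambda>x. map (\<lambda>Y. x \<in> Y) Ys) xs"

lemma pat_eq:
  assumes P: "PD Ys \<phi>" and e: "pat Ys xs = pat Ys ys"
  shows "\<phi> xs = \<phi> ys"
proof -
  have l: "length xs = length ys" using e unfolding pat_def by (rule map_eq_imp_length_eq)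
  have "\<forall>i<length xs. \<forall>Y\<in>set Ys. (xs ! i \<in> Y) = (ys ! i \<in> Y)"
  proof (intro allI impI ballI)
    fix i Y assume i: "i < length xs" and Y: "Y \<in> set Ys"
    have "pat Ys xs ! i = pat Ys ys ! i" using e by simp
    then have "map (\<lambda>Y. xs ! i \<in> Y) Ys = map (\<lambda>Y. ys ! i \<in> Y) Ys"
      using i l by (simp add: pat_def)
    then show "(xs ! i \<in> Y) = (ys ! i \<in> Y)" using Y by (simp add: map_eq_conv)
  qed
  then show ?thesis using P l unfolding PD_def by blast
qed

definition pval :: "'a set list \<Rightarrow> ('a list \<Rightarrow> complex) \<Rightarrow> bool list list \<Rightarrow> complex" where
  "pval Ys \<phi> L = \<phi> (SOME xs. pat Ys xs = L)"

lemma pval: "PD Ys \<phi> \<Longrightarrow> \<phi> xs = pval Ys \<phi> (pat Ys xs)"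
  unfolding pval_def
  by (rule pat_eq) (auto intro: someI[of "\<lambda>ys. pat Ys ys = pat Ys xs" xs, symmetric])

lemma PD_bounded:
  assumes P: "PD Ys \<phi>" and L: "\<forall>xs. length xs \<noteq> N \<longrightarrow> \<phi> xs = 0"
  shows "\<exists>C. \<forall>xs. norm (\<phi> xs) \<le> C"
proof -
  define Pset where "Pset = {L. set L \<subseteq> {l. set l \<subseteq> (UNIV :: bool set) \<and> length l = length Ys} \<and> length L = N}"
  have fin: "finite Pset"
    unfolding Pset_def by (intro finite_lists_length_eq finite_lists_length_eq) simp
  show ?thesis
  proof (intro exI allI)
    fix xs
    show "norm (\<phi> xs) \<le> (\<Sum>L\<in>Pset. norm (pval Ys \<phi> L))"
    proof (cases "length xs = N")
      case False
      then show ?thesis using L by (simp add: sum_nonneg)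
    next
      case True
      then have "pat Ys xs \<in> Pset" unfolding Pset_def pat_def by auto
      then have "norm (pval Ys \<phi> (pat Ys xs)) \<le> (\<Sum>L\<in>Pset. norm (pval Ys \<phi> L))"
        using fin by (intro member_le_sum) auto
      then show ?thesis using pval[OF P] by simp
    qed
  qed
qed

lemma map_upt_eq: "(map h [0..<n] = L) = (length L = n \<and> (\<forall>i<n. h i = L ! i))"
  by (auto simp: list_eq_iff_nth_eq)

lemma map_inner_eq: "(map h Ys = l) = (length l = length Ys \<and> (\<forall>j<length Ys. h (Ys ! j) = l ! j))"
  by (auto simp: list_eq_iff_nth_eq)

lemma pred_mem_eq:
  fixes A :: "'a::topological_space set"
  assumes "i \<le> k" "A \<in> sets borel"
  shows "Measurable.pred (PiM {..k} (\<lambda>_. borel)) (\<lambda>f. (f i \<in> A) = b)"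
proof -
  have m: "(\<lambda>f. f i) \<in> measurable (PiM {..k} (\<lambda>_. borel)) (borel :: 'a::topological_space measure)"
    using assms(1) by (intro measurable_component_singleton) simp
  have p: "Measurable.pred (PiM {..k} (\<lambda>_. borel)) (\<lambda>f. f i \<in> A)"
    by (rule pred_sets2[OF assms(2) m])
  show ?thesis
  proof (cases b)
    case True
    then show ?thesis using p by simp
  next
    case False
    then show ?thesis using pred_intros_logic(2)[OF p] by simp
  qed
qed

lemma PD_meas:
  fixes \<phi> :: "'a::topological_space list \<Rightarrow> complex"
  assumes P: "PD Ys \<phi>" and S: "\<forall>Y\<in>set Ys. Y \<in> sets borel"
  shows "(\<phi> \<circ> (\<lambda>f. map f [0..<Suc k])) \<in> borel_measurable (PiM {..k} (\<lambda>_. borel))"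
proof -
  let ?M = "PiM {..k} (\<lambda>_. borel :: 'a measure)"
  define g where "g = (\<lambda>f::nat \<Rightarrow> 'a. pat Ys (map f [0..<Suc k]))"
  have geq: "g f = L \<longleftrightarrow> length L = Suc k \<and> (\<forall>i<Suc k. length (L ! i) = length Ys \<and>
        (\<forall>j<length Ys. (f i \<in> Ys ! j) = L ! i ! j))" for f L
  proof -
    have g': "g f = map (\<lambda>i. map (\<lambda>Y. f i \<in> Y) Ys) [0..<Suc k]" by (simp add: g_def pat_def)
    show ?thesis unfolding g' map_upt_eq by (simp only: map_inner_eq)
  qed
  have gm: "g \<in> measurable ?M (count_space UNIV)"
  proof (rule measurable_count_space_eq2_countable[THEN iffD2], intro conjI ballI)
    show "g \<in> space ?M \<rightarrow> UNIV" by simp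
  next
    fix L :: "bool list list"
    have "g -` {L} \<inter> space ?M = {f \<in> space ?M. length L = Suc k \<and> (\<forall>i<Suc k. length (L ! i) = length Ys \<and>
        (\<forall>j<length Ys. (f i \<in> Ys ! j) = L ! i ! j))}"
      by (simp only: vimage_def Int_def mem_Collect_eq singleton_iff geq) (rule Collect_cong, rule conj_commute)
    also have "\<dots> \<in> sets ?M"
    proof -
      have "Measurable.pred ?M (\<lambda>f. length L = Suc k \<and> (\<forall>i<Suc k. length (L ! i) = length Ys \<and>
          (\<forall>j<length Ys. (f i \<in> Ys ! j) = L ! i ! j)))"
      proof (intro pred_intros_conj1' pred_intros_countable(1) pred_intros_imp')
        fix i j assume i: "i < Suc k" and j: "j < length Ys"
        show "Measurable.pred ?M (\<lambda>f. (f i \<in> Ys ! j) = L ! i ! j)"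
        proof (rule pred_mem_eq)
          show "i \<le> k" using i by simp
          have "Ys ! j \<in> set Ys" by (rule nth_mem[OF j])
          then show "Ys ! j \<in> sets borel" using S by blast
        qed
      qed
      then show ?thesis unfolding pred_def .
    qed
    finally show "g -` {L} \<inter> space ?M \<in> sets ?M" .
  qed
  have cm: "pval Ys \<phi> \<in> measurable (count_space UNIV) (borel :: complex measure)"
    by (simp add: measurable_count_space_eq1)
  have "(\<phi> \<circ> (\<lambda>f. map f [0..<Suc k])) = (\<lambda>f. pval Ys \<phi> (g f))"
  proof (rule ext)
    fix f :: "nat \<Rightarrow> 'a"
    show "(\<phi> \<circ> (\<lambda>f. map f [0..<Suc k])) f = pval Ys \<phi> (g f)"
      unfolding g_def comp_def by (rule pval[OF P])
  qed
  also have "\<dots> \<in> borel_measurable ?M"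
    by (rule measurable_compose[OF gm cm])
  finally show ?thesis .
qed

lemma CX_intro:
  fixes \<phi> :: "'a::metric_space list \<Rightarrow> complex"
  assumes L: "\<forall>xs. length xs \<noteq> Suc k \<longrightarrow> \<phi> xs = 0" and P: "PD Ys \<phi>" and T: "TN Ys \<phi>"
    and S: "\<forall>Y\<in>set Ys. Y \<in> sets borel"
    and B: "\<forall>R\<ge>0. bounded (\<Inter>Y\<in>set Ys. thick Y R \<inter> thick (- Y) R)"
  shows "\<phi> \<in> CX k"
proof -
  have m: "(\<phi> \<circ> (\<lambda>f. map f [0..<Suc k])) \<in> borel_measurable (PiM {..k} (\<lambda>_. borel))"
    by (rule PD_meas[OF P S])
  obtain C where C: "\<forall>xs. norm (\<phi> xs) \<le> C" using PD_bounded[OF P L] by blast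
  have b: "\<forall>S. bounded_tuples S \<longrightarrow> (\<exists>C. \<forall>xs\<in>S. norm (\<phi> xs) \<le> C)" using C by blast
  have d: "\<forall>R. bounded_tuples ({xs. \<phi> xs \<noteq> 0} \<inter> diag_thick k R)"
    using TN_bounded[OF T L B] by blast
  show ?thesis unfolding CX_def using L m b d by blast
qed

lemma PD_cmult: "PD Ys \<phi> \<Longrightarrow> PD Ys (\<lambda>xs. c * \<phi> xs)"
  unfolding PD_def by metis

lemma TN_cmult: "TN Ys \<phi> \<Longrightarrow> TN Ys (\<lambda>xs. c * \<phi> xs)"
  unfolding TN_def by simp

lemma cobdry_Dc: "cobdry n \<theta> xs = (if length xs = Suc (Suc n) then Dc \<theta> xs else 0)"
  unfolding cobdry_def Dc_def by (simp add: lessThan_Suc_atMost[symmetric])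

lemma prod_list_upt: "prod_list (map g [a..<b]) = (\<Prod>i\<in>{a..<b}. (g i :: complex))"
  using prod.distinct_set_conv_list[of "[a..<b]" g] by simp

theorem corollary5p8:
  fixes X :: "nat \<Rightarrow> 'a::heine_borel set" and n :: nat
  assumes "coarsely_transverse n X"
  defines "A \<equiv> (\<lambda>i x. if i = 0 then (\<Prod>j\<in>{1..n}. ind (X j) x)
                      else ind (- X i) x * (\<Prod>j\<in>{i+1..n}. ind (X j) x))"
  shows "same_HX_class n
           (wedge n (\<lambda>i. if i = 0 then (\<lambda>_. 1) else ind (X i)))
           (\<lambda>xs. (-1)^n * of_nat (fact n) * wedge n A xs)"
proof -
  define Ys where "Ys = map X [1..<Suc n]"
  have lenY: "length Ys = n" by (simp add: Ys_def del: upt_Suc)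
  have setY: "set Ys = X ` {1..n}" by (auto simp: Ys_def simp del: upt_Suc)
  have Sb: "\<forall>Y\<in>set Ys. Y \<in> sets borel"
    using assms(1) unfolding coarsely_transverse_def setY by blast
  have Bd: "\<forall>R\<ge>0. bounded (\<Inter>Y\<in>set Ys. thick Y R \<inter> thick (- Y) R)"
    using assms(1) unfolding coarsely_transverse_def setY by (simp add: image_image)
  have nthY: "Ys ! (j - 1) = X j" if "1 \<le> j" "j \<le> n" for j
    using that by (simp add: Ys_def nth_map del: upt_Suc)
  have e1: "wedge n (\<lambda>i. if i = 0 then (\<lambda>_. 1) else ind (X i)) = th1 Ys"
    unfolding th1_def lenY
  proof (rule wedge_cong)
    fix j assume j: "j \<le> n"
    show "(if j = 0 then (\<lambda>_. 1) else ind (X j)) = F1 Ys j"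
      using nthY[of j] j by (auto simp: F1_def)
  qed
  have e2: "wedge n A = th2 Ys"
    unfolding th2_def lenY
  proof (rule wedge_cong)
    fix j assume j: "j \<le> n"
    show "A j = AA Ys j"
    proof (rule ext)
      fix x
      show "A j x = AA Ys j x"
      proof (cases "j = 0")
        case True
        have "PP Ys x = (\<Prod>i\<in>{1..<Suc n}. ind (X i) x)"
          unfolding PP_def Ys_def map_map comp_def by (rule prod_list_upt)
        also have "{1..<Suc n} = {1..n}" by auto
        finally show ?thesis using True by (simp add: A_def AA_def)
      next
        case False
        have "drop j Ys = map X [Suc j..<Suc n]" by (simp add: Ys_def drop_map del: upt_Suc)
        then have "PP (drop j Ys) x = (\<Prod>i\<in>{Suc j..<Suc n}. ind (X i) x)"
          unfolding PP_def map_map comp_def by (simp add: prod_list_upt)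
        also have "{Suc j..<Suc n} = {j+1..n}" by auto
        finally show ?thesis using False nthY[of j] j by (simp add: A_def AA_def)
      qed
    qed
  qed
  have M: "(\<forall>xs. Dc (th1 Ys) xs = 0) \<and> (\<forall>xs. Dc (th2 Ys) xs = 0) \<and> TN Ys (th1 Ys) \<and> TN Ys (th2 Ys) \<and>
    (\<exists>\<psi>. (\<forall>xs. Dc \<psi> xs = th1 Ys xs - cc (length Ys) * th2 Ys xs) \<and> TN Ys \<psi> \<and> PD Ys \<psi> \<and>
         (\<forall>xs. length xs \<noteq> length Ys \<longrightarrow> \<psi> xs = 0) \<and> \<psi> [] = 0)"
    by (rule main)
  then have c1: "\<And>xs. Dc (th1 Ys) xs = 0" and c2: "\<And>xs. Dc (th2 Ys) xs = 0"
    and T1: "TN Ys (th1 Ys)" and T2: "TN Ys (th2 Ys)" by auto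
  from M obtain \<psi> where p1: "\<And>xs. Dc \<psi> xs = th1 Ys xs - cc n * th2 Ys xs" and p2: "TN Ys \<psi>"
    and p3: "PD Ys \<psi>" and p4: "\<And>xs. length xs \<noteq> n \<Longrightarrow> \<psi> xs = 0" and p5: "\<psi> [] = 0"
    unfolding lenY by blast
  have L1: "\<forall>xs. length xs \<noteq> Suc n \<longrightarrow> th1 Ys xs = 0" by (simp add: th1_def lenY wedge_len)
  have L2: "\<forall>xs. length xs \<noteq> Suc n \<longrightarrow> th2 Ys xs = 0" by (simp add: th2_def lenY wedge_len)
  have th2': "(\<lambda>xs. (-1)^n * of_nat (fact n) * wedge n A xs) = (\<lambda>xs. cc n * th2 Ys xs)"
    by (simp add: e2 cc_def)
  have X1: "th1 Ys \<in> CX n" by (rule CX_intro[OF L1 PD_th1 T1 Sb Bd])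
  have X2: "(\<lambda>xs. cc n * th2 Ys xs) \<in> CX n"
    by (rule CX_intro[OF _ PD_cmult[OF PD_th2] TN_cmult[OF T2] Sb Bd]) (use L2 in simp)
  have B1: "cobdry n (th1 Ys) = (\<lambda>_. 0)" by (rule ext) (simp add: cobdry_Dc c1)
  have B2: "cobdry n (\<lambda>xs. cc n * th2 Ys xs) = (\<lambda>_. 0)" by (rule ext) (simp add: cobdry_Dc Dc_cmult c2)
  have last: "if n = 0 then th1 Ys = (\<lambda>xs. cc n * th2 Ys xs)
      else (\<exists>\<psi>\<in>CX (n - 1). (\<lambda>xs. th1 Ys xs - cc n * th2 Ys xs) = cobdry (n - 1) \<psi>)"
  proof (cases "n = 0")
    case True
    have "th1 Ys xs = cc n * th2 Ys xs" for xs
    proof (cases "length xs = Suc 0")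
      case True
      then obtain x where "xs = [x]" by (cases xs) auto
      then have "Dc \<psi> xs = 0" using p5 by (simp add: Dc_def)
      then show ?thesis using p1[of xs] by simp
    next
      case False
      then show ?thesis using L1 L2 \<open>n = 0\<close> by simp
    qed
    then show ?thesis using True by auto
  next
    case False
    have "\<psi> \<in> CX (n - 1)"
      by (rule CX_intro[OF _ p3 p2 Sb Bd]) (use p4 False in simp)
    moreover have "(\<lambda>xs. th1 Ys xs - cc n * th2 Ys xs) = cobdry (n - 1) \<psi>"
    proof (rule ext)
      fix xs
      show "th1 Ys xs - cc n * th2 Ys xs = cobdry (n - 1) \<psi> xs"
      proof (cases "length xs = Suc n")
        case True
        then show ?thesis using False p1 by (simp add: cobdry_Dc)
      next
        case F2: False
        then show ?thesis using False L1 L2 by (simp add: cobdry_Dc)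
      qed
    qed
    ultimately show ?thesis using False by auto
  qed
  show ?thesis
    unfolding same_HX_class_def e1 th2'
    using X1 X2 B1 B2 last by simp
qed
end
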